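(* Let $\lambda>0$, $L>0$, and let $\{\{x_t(i)\}_{i\in[k]}\}_{t\in[T]}$ be any sequence with $x_t(i)\in\mathbb{R}^d$ and $\|x_t(i)\|_2\le L$ for all $i\in[k]$, $t\in[T]$. Let $V_0=\lambda I$ and $V_t=\lambda I+\sum_{s\in[t]}\sum_{i\in[k]}x_s(i)x_s(i)^\top$. Then $$\sum_{t\in[T]}\sum_{i\in[k]}\mathbb{1}\Big(\|x_t(i)\|_{V_{t-1}^{-1}}>1/\sqrt k\Big)\le 2dk\log\big(1+L^2kT/(d\lambda)\big).$$
   Context: For a positive definite matrix $A$ and vector $x$, $\|x\|_A=\sqrt{x^\top Ax}$; $[n]=\{1,\dots,n\}$. *)

theory Defs
  imports "HOL-Analysis.Analysis"
begin

definition outer :: "real^'n \<Rightarrow> real^'n^'n" where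
  "outer v = (\<chi> a b. v $ a * v $ b)"

definition mnorm :: "real^'n^'n \<Rightarrow> real^'n \<Rightarrow> real" where
  "mnorm A v = sqrt (v \<bullet> (A *v v))"

definition Vmat :: "real \<Rightarrow> nat \<Rightarrow> (nat \<Rightarrow> nat \<Rightarrow> real^'n) \<Rightarrow> nat \<Rightarrow> real^'n^'n" where
  "Vmat lam k x t = lam *\<^sub>R mat 1 + (\<Sum>s\<in>{1..t}. \<Sum>i\<in>{1..k}. outer (x s i))"

end

theory Submission
  imports Defs
begin


lemma inner_transpose: "(A *v x) \<bullet> (y::real^'n) = x \<bullet> (transpose A *v y)"
  by (metis dot_lmul_matrix inner_commute vector_transpose_matrix)

lemma det_two_prop_rows:
  fixes M :: "real^'n^'n" and y :: "real^'n"
  assumes "i \<noteq> j" "row i M = a *s y" "row j M = b *s y"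
  shows "det M = 0"
proof (cases "a = 0")
  case True
  then have "row i M = 0" using assms by simp
  then show ?thesis by (metis det_zero_row)
next
  case False
  let ?x = "(- (b / a)) *s row i M"
  have "?x \<in> vec.span {row l M |l. l \<noteq> j}"
    using assms(1) by (intro vec.span_scale vec.span_base) auto
  then have "det (\<chi> k. if k = j then row j M + ?x else row k M) = det M"
    by (rule det_row_span)
  moreover have z: "row j M + ?x = 0" using assms False by (simp add: vec_eq_iff)
  have "(\<chi> k. if k = j then row j M + ?x else row k M) = (\<chi> k. if k = j then 0 else row k M)"
    by (simp only: z)
  ultimately have "det (\<chi> k. if k = j then 0 else row k M) = det M"
    by simp
  then show ?thesis using det_row_0 by metis
qed

lemma remove_multiples:
  fixes A :: "real^'n^'n" and y :: "real^'n"
  assumes "finite T" "p \<notin> T"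
  shows "det (\<chi> i. if i = p then y else if i \<in> T then row i A + c i *s y else row i A)
       = det (\<chi> i. if i = p then y else row i A)"
  using assms
proof (induction T rule: finite_induct)
  case empty
  show ?case by (rule arg_cong[where f=det]) (simp add: vec_eq_iff)
next
  case (insert q T)
  let ?M = "(\<chi> i. if i = p then y else if i \<in> insert q T then row i A + c i *s y else row i A) :: real^'n^'n"
  let ?N = "(\<chi> i. if i = p then y else if i \<in> T then row i A + c i *s y else row i A) :: real^'n^'n"
  have pq: "p \<noteq> q" using insert by auto
  have "(- c q) *s y \<in> vec.span {row j ?M |j. j \<noteq> q}"
    using pq by (intro vec.span_scale vec.span_base) (auto simp: row_def intro!: exI[of _ p])
  then have "det (\<chi> k. if k = q then row q ?M + (- c q) *s y else row k ?M) = det ?M"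
    by (rule det_row_span)
  moreover have "(\<chi> k. if k = q then row q ?M + (- c q) *s y else row k ?M) = ?N"
    using pq insert(2) by (simp add: vec_eq_iff row_def algebra_simps)
  ultimately have "det ?M = det ?N" by simp
  then show ?case using insert by simp
qed

lemma rank_one_det_aux:
  fixes A :: "real^'n^'n"
  assumes "transpose A *v w = y" "finite T"
  shows "det (\<chi> i. if i \<in> T then row i A + y$i *s y else row i A) = det A * (1 + (\<Sum>i\<in>T. y$i * w$i))"
  using assms(2)
proof (induction T rule: finite_induct)
  case empty
  have "(\<chi> i. row i A) = A" by (simp add: vec_eq_iff row_def)
  then show ?case by simp
next
  case (insert p T)
  have yw: "y = sum (\<lambda>i. w$i *s row i A) UNIV"
    using assms by (simp add: vec_eq_iff matrix_vector_mult_def transpose_def row_def sum_component mult.commute)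
  let ?c = "\<lambda>i. if i \<in> T then row i A + y$i *s y else row i A"
  have "det (\<chi> i. if i \<in> insert p T then row i A + y$i *s y else row i A)
      = det (\<chi> i. if i = p then row p A + y$p *s y else ?c i)"
    by (rule arg_cong[where f=det]) (auto simp: vec_eq_iff)
  also have "\<dots> = det (\<chi> i. if i = p then row p A else ?c i) + det (\<chi> i. if i = p then y$p *s y else ?c i)"
    by (rule det_row_add)
  also have "det (\<chi> i. if i = p then row p A else ?c i) = det (\<chi> i. ?c i)"
    using insert by (intro arg_cong[where f=det]) (auto simp: vec_eq_iff)
  also have "det (\<chi> i. if i = p then y$p *s y else ?c i) = y$p * det (\<chi> i. if i = p then y else ?c i)"
    by (rule det_row_mul)
  also have "det (\<chi> i. if i = p then y else ?c i) = det (\<chi> i. if i = p then y else row i A)"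
    by (rule remove_multiples) (use insert in auto)
  also have "\<dots> = w$p * det A"
    by (subst yw) (rule cramer_lemma_transpose)
  finally show ?case using insert by (simp add: algebra_simps)
qed

lemma rank_one_det:
  fixes A :: "real^'n^'n"
  assumes "transpose A *v w = y"
  shows "det (A + outer y) = det A * (1 + y \<bullet> w)"
proof -
  have "A + outer y = (\<chi> i. if i \<in> UNIV then row i A + y$i *s y else row i A)"
    by (simp add: vec_eq_iff outer_def row_def)
  then show ?thesis using rank_one_det_aux[OF assms, of UNIV]
    by (simp add: inner_vec_def)
qed



definition pd :: "real^'n^'n \<Rightarrow> bool" where
  "pd A \<longleftrightarrow> transpose A = A \<and> (\<forall>v. v \<noteq> 0 \<longrightarrow> 0 < v \<bullet> (A *v v))"

lemma pd_sym: "pd A \<Longrightarrow> A$i$j = A$j$i"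
  unfolding pd_def by (metis transpose_def vec_lambda_beta)

lemma pd_pos: "pd A \<Longrightarrow> v \<noteq> 0 \<Longrightarrow> 0 < v \<bullet> (A *v v)"
  unfolding pd_def by auto

lemma pd_nonneg: "pd A \<Longrightarrow> 0 \<le> v \<bullet> (A *v v)"
  using pd_pos[of A v] by (cases "v = 0") auto

lemma pd_diag_pos: "pd A \<Longrightarrow> 0 < A$i$i"
proof -
  assume "pd A"
  then have "0 < axis i 1 \<bullet> (A *v axis i 1)"
    by (rule pd_pos) (simp add: axis_eq_0_iff)
  then show ?thesis
    by (simp add: inner_vec_def matrix_vector_mult_def axis_def if_distrib[of "\<lambda>x. _ * x"] if_distrib[of "\<lambda>x. x * _"] cong: if_cong)
qed

lemma congr_entries:
  fixes A :: "real^'n^'n" and r :: "real^'n" and p :: 'n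
  defines "E \<equiv> mat 1 - (\<chi> i k. if k = p then r$i else 0)"
  shows "(E ** A ** transpose E)$i$j = A$i$j - r$j * A$i$p - r$i * A$p$j + r$i * r$j * A$p$p"
  unfolding E_def
  by (simp add: matrix_matrix_mult_def transpose_def mat_def algebra_simps sum.distrib
        sum_subtractf if_distrib[of "\<lambda>x. x * _"] if_distrib[of "\<lambda>x. _ * x"] sum.If_cases
        sum_distrib_left sum_distrib_right cong: if_cong)

lemma hadamard_aux:
  fixes S :: "'n::finite set" and A :: "real^'n^'n"
  assumes "finite S"
  shows "pd A \<Longrightarrow> (\<And>i j. i \<noteq> j \<Longrightarrow> i \<notin> S \<or> j \<notin> S \<Longrightarrow> A$i$j = 0)
         \<Longrightarrow> 0 < det A \<and> det A \<le> (\<Prod>i\<in>UNIV. A$i$i)"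
  using assms
proof (induction S arbitrary: A rule: finite_induct)
  case empty
  then have "det A = (\<Prod>i\<in>UNIV. A$i$i)" by (intro det_diagonal) auto
  moreover have "0 < (\<Prod>i\<in>UNIV. A$i$i)"
    using empty pd_diag_pos by (intro prod_pos) auto
  ultimately show ?case by simp
next
  case (insert p S)
  note pdA = insert.prems(1)
  define c where "c = A$p$p"
  have c: "0 < c" unfolding c_def using pdA by (rule pd_diag_pos)
  define r where "r = (\<chi> i. if i = p then 0 else A$i$p / c)"
  define E :: "real^'n^'n" where "E = mat 1 - (\<chi> i k. if k = p then r$i else 0)"
  define B where "B = E ** A ** transpose E"
  have Bij: "B$i$j = A$i$j - r$j * A$i$p - r$i * A$p$j + r$i * r$j * c" for i j
    unfolding B_def E_def c_def by (rule congr_entries)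
  have sym: "A$i$j = A$j$i" for i j using pdA by (rule pd_sym)
  define x where "x = (\<chi> k. (if k = p then 1 else 0) - r$k)"
  have xs: "sum (\<lambda>l. x$l *s row l (mat 1 :: real^'n^'n)) UNIV = x"
    by (simp add: vec_eq_iff sum_component row_def mat_def if_distrib[of "\<lambda>x. _ * x"] cong: if_cong)
  have tE: "transpose E = (\<chi> i. if i = p then sum (\<lambda>l. x$l *s row l (mat 1 :: real^'n^'n)) UNIV else row i (mat 1))"
    unfolding xs by (simp add: vec_eq_iff E_def x_def transpose_def row_def mat_def r_def)
  have dtE: "det (transpose E) = 1"
    unfolding tE by (subst cramer_lemma_transpose) (simp add: x_def r_def)
  then have dE: "det E = 1" by simp
  have detB: "det B = det A"
    unfolding B_def by (simp add: det_mul dE dtE)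
  have invtE: "inj ((*v) (transpose E))"
    using dtE by (intro inj_matrix_vector_mult) (simp add: invertible_det_nz)
  have pdB: "pd B"
    unfolding pd_def
  proof safe
    show "transpose B = B"
      by (simp add: vec_eq_iff transpose_def Bij r_def) (auto simp: sym)
  next
    fix v :: "real^'n" assume v: "v \<noteq> 0"
    define u where "u = transpose E *v v"
    have u: "u \<noteq> 0"
    proof
      assume "u = 0"
      then have "transpose E *v v = transpose E *v 0" by (simp only: u_def matrix_vector_mult_0_right)
      from injD[OF invtE this] v show False by simp
    qed
    have "v \<bullet> (B *v v) = v \<bullet> (E *v (A *v u))"
      by (simp only: B_def u_def matrix_vector_mul_assoc matrix_mul_assoc)
    also have "\<dots> = u \<bullet> (A *v u)"
      by (metis inner_commute inner_transpose u_def)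
    finally show "0 < v \<bullet> (B *v v)" using pd_pos[OF pdA u] by simp
  qed
  have supp: "B$i$j = 0" if "i \<noteq> j" "i \<notin> S \<or> j \<notin> S" for i j
  proof -
    consider "i = p" | "j = p" | "i \<noteq> p" "j \<noteq> p" by blast
    then show ?thesis
    proof cases
      case 1 then show ?thesis using that c by (simp add: Bij r_def c_def sym[of j p])
    next
      case 2 then show ?thesis using that c by (simp add: Bij r_def c_def sym[of p i])
    next
      case 3
      then have "i \<notin> insert p S \<or> j \<notin> insert p S" using that by auto
      then show ?thesis using 3 that insert.prems(2)[of i j] insert.prems(2)[of i p] insert.prems(2)[of j p]
        by (auto simp: Bij r_def sym[of p j])
    qed
  qed
  have IH: "0 < det B \<and> det B \<le> (\<Prod>i\<in>UNIV. B$i$i)"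
    using pdB supp by (intro insert.IH) auto
  have diag: "B$i$i \<le> A$i$i" for i
  proof (cases "i = p")
    case True then show ?thesis using c by (simp add: Bij r_def c_def)
  next
    case False
    then have "B$i$i = A$i$i - (A$i$p)^2 / c"
      using c by (simp add: Bij r_def sym[of p i] power2_eq_square field_simps)
    then show ?thesis using c by simp
  qed
  have "(\<Prod>i\<in>UNIV. B$i$i) \<le> (\<Prod>i\<in>UNIV. A$i$i)"
    using diag pd_diag_pos[OF pdB] by (intro prod_mono) (auto intro: less_imp_le)
  then show ?case using IH detB by simp
qed

lemma hadamard:
  fixes A :: "real^'n^'n"
  assumes "pd A"
  shows "0 < det A" "det A \<le> (\<Prod>i\<in>UNIV. A$i$i)"
  using hadamard_aux[of UNIV A] assms by auto



definition qf :: "real^'n^'n \<Rightarrow> real^'n \<Rightarrow> real" where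
  "qf A y = y \<bullet> (matrix_inv A *v y)"

lemma pd_inv:
  assumes "pd A"
  shows "A ** matrix_inv A = mat 1" "matrix_inv A ** A = mat 1"
proof -
  have "invertible A" using hadamard(1)[OF assms] by (simp add: invertible_det_nz)
  then have "\<exists>A'. A ** A' = mat 1 \<and> A' ** A = mat 1" by (simp add: invertible_def)
  then have "A ** matrix_inv A = mat 1 \<and> matrix_inv A ** A = mat 1"
    unfolding matrix_inv_def by (rule someI_ex)
  then show "A ** matrix_inv A = mat 1" "matrix_inv A ** A = mat 1" by auto
qed

lemma pd_solve1: "pd A \<Longrightarrow> A *v (matrix_inv A *v y) = y"
  by (simp add: matrix_vector_mul_assoc pd_inv)

lemma pd_solve2: "pd A \<Longrightarrow> matrix_inv A *v (A *v y) = y"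
  by (simp add: matrix_vector_mul_assoc pd_inv)

lemma pd_transpose: "pd A \<Longrightarrow> transpose A = A"
  by (simp add: pd_def)

lemma pd_form_sym: "pd A \<Longrightarrow> a \<bullet> (A *v b) = b \<bullet> (A *v a)"
  by (metis inner_commute inner_transpose pd_transpose)

lemma pd_inv_sym:
  assumes "pd A"
  shows "u \<bullet> (matrix_inv A *v y) = y \<bullet> (matrix_inv A *v u)"
proof -
  define p where "p = matrix_inv A *v y"
  define a where "a = matrix_inv A *v u"
  have "u \<bullet> p = (A *v a) \<bullet> p" using pd_solve1[OF assms] a_def by simp
  also have "\<dots> = a \<bullet> (A *v p)" using inner_transpose pd_transpose[OF assms] by metis
  also have "\<dots> = a \<bullet> y" using pd_solve1[OF assms] p_def by simp
  finally show ?thesis by (simp add: p_def a_def inner_commute)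
qed

lemma qf_alt: "pd A \<Longrightarrow> qf A y = (matrix_inv A *v y) \<bullet> (A *v (matrix_inv A *v y))"
  by (simp add: qf_def pd_solve1 inner_commute)

lemma qf_nonneg: "pd A \<Longrightarrow> 0 \<le> qf A y"
  by (simp add: qf_alt pd_nonneg)

lemma pd_cs:
  assumes "pd A"
  shows "(a \<bullet> (A *v b))^2 \<le> (a \<bullet> (A *v a)) * (b \<bullet> (A *v b))"
proof (cases "b = 0")
  case True then show ?thesis by simp
next
  case False
  define \<beta> where "\<beta> = b \<bullet> (A *v b)"
  define \<gamma> where "\<gamma> = a \<bullet> (A *v b)"
  define \<alpha> where "\<alpha> = a \<bullet> (A *v a)"
  have \<beta>: "0 < \<beta>" unfolding \<beta>_def using pd_pos[OF assms False] .
  define t where "t = \<gamma> / \<beta>"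
  have "0 \<le> (a - t *\<^sub>R b) \<bullet> (A *v (a - t *\<^sub>R b))" by (rule pd_nonneg[OF assms])
  also have "\<dots> = \<alpha> - 2 * t * \<gamma> + t^2 * \<beta>"
    using pd_form_sym[OF assms, of b a]
    by (simp add: \<alpha>_def \<beta>_def \<gamma>_def algebra_simps inner_diff_left inner_diff_right power2_eq_square)
  also have "\<dots> = \<alpha> - \<gamma>^2 / \<beta>"
    using \<beta> by (simp add: t_def field_simps power2_eq_square)
  finally have "\<gamma>^2 / \<beta> \<le> \<alpha>" by simp
  then have "\<gamma>^2 \<le> \<alpha> * \<beta>" using \<beta> by (simp add: field_simps)
  then show ?thesis by (simp add: \<alpha>_def \<beta>_def \<gamma>_def)
qed

lemma outer_mult: "outer u *v w = (u \<bullet> w) *\<^sub>R u"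
  by (simp add: vec_eq_iff outer_def matrix_vector_mult_def inner_vec_def sum_distrib_left sum_distrib_right algebra_simps)

lemma pd_add_outer:
  assumes "pd A"
  shows "pd (A + outer u)"
  unfolding pd_def
proof safe
  show "transpose (A + outer u) = A + outer u"
    using pd_transpose[OF assms] by (simp add: vec_eq_iff transpose_def outer_def)
next
  fix v :: "real^'a" assume "v \<noteq> 0"
  then have "0 < v \<bullet> (A *v v)" by (rule pd_pos[OF assms])
  moreover have "v \<bullet> ((A + outer u) *v v) = v \<bullet> (A *v v) + (u \<bullet> v)^2"
    by (simp add: matrix_vector_mult_add_rdistrib outer_mult inner_add_right power2_eq_square inner_commute)
  moreover have "0 \<le> (u \<bullet> v)^2" by simp
  ultimately show "0 < v \<bullet> ((A + outer u) *v v)" by linarith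
qed

lemma qf_update:
  assumes pdA: "pd A"
  shows "qf A y / (1 + qf A u) \<le> qf (A + outer u) y"
proof -
  define B where "B = A + outer u"
  have pdB: "pd B" unfolding B_def by (rule pd_add_outer[OF pdA])
  define w where "w = matrix_inv B *v y"
  define p where "p = matrix_inv A *v y"
  define a where "a = matrix_inv A *v u"
  define s where "s = u \<bullet> w"
  define qu where "qu = u \<bullet> a"
  define qy where "qy = y \<bullet> p"
  define m where "m = u \<bullet> p"
  have qu0: "0 \<le> qu" using qf_nonneg[OF pdA, of u] by (simp add: qf_def qu_def a_def)
  have "B *v w = y" unfolding w_def by (rule pd_solve1[OF pdB])
  then have "A *v w + s *\<^sub>R u = y" by (simp add: B_def matrix_vector_mult_add_rdistrib outer_mult s_def)
  then have "matrix_inv A *v (A *v w + s *\<^sub>R u) = p" by (simp add: p_def)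
  then have wp: "w + s *\<^sub>R a = p"
    by (simp add: matrix_vector_right_distrib matrix_vector_mult_scaleR pd_solve2[OF pdA] a_def)
  then have "u \<bullet> w + s * qu = m" by (metis inner_add_right inner_scaleR_right m_def qu_def)
  then have s: "s * (1 + qu) = m" by (simp add: s_def algebra_simps)
  have ya: "y \<bullet> a = m" using pd_inv_sym[OF pdA, of u y] by (simp add: a_def p_def m_def)
  have "y \<bullet> w + s * m = qy" using wp ya by (metis inner_add_right inner_scaleR_right qy_def)
  then have yw: "y \<bullet> w = qy - m * s" by (simp add: algebra_simps)
  have "s = m / (1 + qu)" using s qu0 by (simp add: field_simps)
  then have qB: "y \<bullet> w = qy - m^2 / (1 + qu)"
    using yw by (simp add: power2_eq_square)
  have cs: "(a \<bullet> (A *v p))^2 \<le> (a \<bullet> (A *v a)) * (p \<bullet> (A *v p))" by (rule pd_cs[OF pdA])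
  have e1: "a \<bullet> (A *v p) = m" using ya pd_solve1[OF pdA] by (simp add: p_def inner_commute)
  have e2: "a \<bullet> (A *v a) = qu" using pd_solve1[OF pdA] by (simp add: a_def qu_def inner_commute)
  have e3: "p \<bullet> (A *v p) = qy" using pd_solve1[OF pdA] by (simp add: p_def qy_def inner_commute)
  have m2: "m^2 \<le> qu * qy" using cs e1 e2 e3 by simp
  have "qy / (1 + qu) = qy - qu * qy / (1 + qu)" using qu0 by (simp add: field_simps)
  also have "\<dots> \<le> qy - m^2 / (1 + qu)" using m2 qu0 by (simp add: divide_right_mono)
  finally show ?thesis using qB by (simp add: qf_def B_def w_def qy_def p_def qu_def a_def)
qed



lemma pd_add_sum_outer:
  "finite I \<Longrightarrow> pd A \<Longrightarrow> pd (A + (\<Sum>i\<in>I. outer (y i)))"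
proof (induction I arbitrary: A rule: finite_induct)
  case empty then show ?case by simp
next
  case (insert j I)
  have "A + (\<Sum>i\<in>insert j I. outer (y i)) = (A + outer (y j)) + (\<Sum>i\<in>I. outer (y i))"
    using insert by (simp add: algebra_simps)
  then show ?case using insert pd_add_outer by metis
qed

lemma round_det:
  "finite I \<Longrightarrow> pd A \<Longrightarrow> det A * (1 + (\<Sum>i\<in>I. qf A (y i))) \<le> det (A + (\<Sum>i\<in>I. outer (y i)))"
proof (induction I arbitrary: A rule: finite_induct)
  case empty then show ?case by simp
next
  case (insert j I)
  note pdA = insert.prems
  define A' where "A' = A + outer (y j)"
  have pdA': "pd A'" unfolding A'_def by (rule pd_add_outer[OF pdA])
  have eq: "A + (\<Sum>i\<in>insert j I. outer (y i)) = A' + (\<Sum>i\<in>I. outer (y i))"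
    using insert by (simp add: algebra_simps A'_def)
  define qj where "qj = qf A (y j)"
  have qj0: "0 \<le> qj" unfolding qj_def by (rule qf_nonneg[OF pdA])
  have "transpose A *v (matrix_inv A *v y j) = y j"
    using pd_transpose[OF pdA] pd_solve1[OF pdA] by simp
  then have dA': "det A' = det A * (1 + qj)"
    unfolding A'_def qj_def qf_def by (rule rank_one_det)
  have dA: "0 < det A" by (rule hadamard(1)[OF pdA])
  have "(\<Sum>i\<in>I. qf A (y i)) / (1 + qj) = (\<Sum>i\<in>I. qf A (y i) / (1 + qj))"
    by (simp add: sum_divide_distrib)
  also have "\<dots> \<le> (\<Sum>i\<in>I. qf A' (y i))"
    unfolding A'_def qj_def by (intro sum_mono qf_update[OF pdA])
  finally have s: "(\<Sum>i\<in>I. qf A (y i)) / (1 + qj) \<le> (\<Sum>i\<in>I. qf A' (y i))" .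
  have "det A * (1 + (\<Sum>i\<in>insert j I. qf A (y i)))
      = det A * (1 + qj) * (1 + (\<Sum>i\<in>I. qf A (y i)) / (1 + qj))"
    using insert qj0 by (simp add: qj_def field_simps)
  also have "\<dots> \<le> det A' * (1 + (\<Sum>i\<in>I. qf A' (y i)))"
    unfolding dA' using s dA qj0 by (intro mult_left_mono) auto
  also have "\<dots> \<le> det (A' + (\<Sum>i\<in>I. outer (y i)))" by (rule insert.IH[OF pdA'])
  finally show ?case using eq by simp
qed

lemma ln_lower: "0 \<le> (u::real) \<Longrightarrow> u \<le> 1 \<Longrightarrow> u / 2 \<le> ln (1 + u)"
proof -
  assume u: "0 \<le> u" "u \<le> 1"
  have "ln (1 / (1 + u)) \<le> 1 / (1 + u) - 1" using u by (intro ln_le_minus_one) (simp add: add_pos_nonneg)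
  then have "u / (1 + u) \<le> ln (1 + u)" using u by (simp add: ln_div field_simps)
  moreover have "u / 2 \<le> u / (1 + u)" using u by (intro divide_left_mono) auto
  ultimately show ?thesis by linarith
qed



lemma pd_scaled_id: "0 < lam \<Longrightarrow> pd (lam *\<^sub>R mat 1 :: real^'n^'n)"
  unfolding pd_def
proof safe
  show "transpose (lam *\<^sub>R mat 1 :: real^'n^'n) = lam *\<^sub>R mat 1"
    by (simp add: vec_eq_iff transpose_def mat_def)
next
  fix v :: "real^'n" assume "0 < lam" "v \<noteq> 0"
  have "(lam *\<^sub>R mat 1 :: real^'n^'n) *v v = lam *\<^sub>R v"
    by (simp add: vec_eq_iff matrix_vector_mult_def mat_def if_distrib[of "\<lambda>x. x * _"] if_distrib[of "\<lambda>x. _ * x"] cong: if_cong)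
  then show "0 < v \<bullet> ((lam *\<^sub>R mat 1 :: real^'n^'n) *v v)"
    using \<open>0 < lam\<close> \<open>v \<noteq> 0\<close> by simp
qed

lemma Vmat_Suc: "Vmat lam k x (Suc t) = Vmat lam k x t + (\<Sum>i\<in>{1..k}. outer (x (Suc t) i))"
proof -
  have "{1..Suc t} = insert (Suc t) {1..t}" by auto
  then show ?thesis by (simp add: Vmat_def algebra_simps)
qed

lemma Vmat_0: "Vmat lam k x 0 = lam *\<^sub>R mat 1"
  by (simp add: Vmat_def)

lemma Vmat_pd: "0 < lam \<Longrightarrow> pd (Vmat lam k x t)"
  by (induction t) (auto simp: Vmat_0 Vmat_Suc pd_scaled_id intro: pd_add_sum_outer)

lemma Vmat_diag: "(Vmat lam k x t)$i$i = lam + (\<Sum>s\<in>{1..t}. \<Sum>j\<in>{1..k}. (x s j $ i)^2)"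
  by (simp add: Vmat_def sum_component outer_def mat_def power2_eq_square)

lemma norm_sq_sum: "(norm (v::real^'n))^2 = (\<Sum>i\<in>UNIV. (v$i)^2)"
  unfolding norm_vec_def L2_set_def by (simp add: sum_nonneg)

theorem lemma6:
  fixes lam L :: real and k T :: nat and x :: "nat \<Rightarrow> nat \<Rightarrow> real^'n"
  assumes "lam > 0" and "L > 0"
    and "\<And>t i. t \<in> {1..T} \<Longrightarrow> i \<in> {1..k} \<Longrightarrow> norm (x t i) \<le> L"
  shows "(\<Sum>t\<in>{1..T}. \<Sum>i\<in>{1..k}.
            (if mnorm (matrix_inv (Vmat lam k x (t - 1))) (x t i) > 1 / sqrt (real k) then 1 else 0))
         \<le> 2 * real CARD('n) * real k
             * ln (1 + L\<^sup>2 * real k * real T / (real CARD('n) * lam))"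
proof (cases "k = 0")
  case True then show ?thesis by simp
next
  case False
  then have k: "0 < real k" by simp
  note lam = assms(1)
  define d where "d = real CARD('n)"
  have d: "0 < d" by (simp add: d_def)
  define V where "V = Vmat lam k x"
  define c where "c = (\<lambda>t. \<Sum>i\<in>{1..k}.
            (if mnorm (matrix_inv (V (t - 1))) (x t i) > 1 / sqrt (real k) then 1 else 0::real))"
  have pdV: "pd (V t)" for t unfolding V_def using lam by (rule Vmat_pd)
  have detpos: "0 < det (V t)" for t by (rule hadamard(1)[OF pdV])
  have c_bounds: "0 \<le> c t" "c t \<le> real k" for t
  proof -
    show "0 \<le> c t" unfolding c_def by (intro sum_nonneg) auto
    have "c t \<le> (\<Sum>i\<in>{1..k}. 1)" unfolding c_def by (intro sum_mono) auto
    then show "c t \<le> real k" by simp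
  qed
  have c_q: "c t / real k \<le> (\<Sum>i\<in>{1..k}. qf (V (t - 1)) (x t i))" for t
  proof -
    have "c t / real k = (\<Sum>i\<in>{1..k}.
            (if mnorm (matrix_inv (V (t - 1))) (x t i) > 1 / sqrt (real k) then 1 else 0) / real k)"
      unfolding c_def by (simp add: sum_divide_distrib)
    also have "\<dots> \<le> (\<Sum>i\<in>{1..k}. qf (V (t - 1)) (x t i))"
    proof (intro sum_mono)
      fix i
      let ?q = "qf (V (t - 1)) (x t i)"
      have q0: "0 \<le> ?q" by (rule qf_nonneg[OF pdV])
      have mn: "mnorm (matrix_inv (V (t - 1))) (x t i) = sqrt ?q" by (simp add: mnorm_def qf_def)
      show "(if mnorm (matrix_inv (V (t - 1))) (x t i) > 1 / sqrt (real k) then 1 else 0) / real k \<le> ?q"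
      proof (cases "mnorm (matrix_inv (V (t - 1))) (x t i) > 1 / sqrt (real k)")
        case True
        then have "sqrt (1 / real k) < sqrt ?q" unfolding mn by (simp add: real_sqrt_divide)
        then have "1 / real k < ?q" by (simp only: real_sqrt_less_iff)
        then show ?thesis using True by simp
      next
        case False then show ?thesis using q0 by simp
      qed
    qed
    finally show ?thesis .
  qed
  have step: "ln (det (V t)) + c (Suc t) / (2 * real k) \<le> ln (det (V (Suc t)))" for t
  proof -
    have "det (V t) * (1 + c (Suc t) / real k) \<le> det (V t) * (1 + (\<Sum>i\<in>{1..k}. qf (V t) (x (Suc t) i)))"
      using c_q[of "Suc t"] detpos[of t] by (intro mult_left_mono) auto
    also have "\<dots> \<le> det (V (Suc t))"
      unfolding V_def Vmat_Suc by (rule round_det) (auto intro: pdV[unfolded V_def])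
    finally have le: "det (V t) * (1 + c (Suc t) / real k) \<le> det (V (Suc t))" .
    have pos1: "0 < 1 + c (Suc t) / real k" using c_bounds[of "Suc t"] k by (simp add: add_pos_nonneg)
    have "ln (det (V t)) + ln (1 + c (Suc t) / real k) = ln (det (V t) * (1 + c (Suc t) / real k))"
      using detpos[of t] pos1 by (simp add: ln_mult)
    also have "\<dots> \<le> ln (det (V (Suc t)))"
      using le detpos[of t] detpos[of "Suc t"] pos1 by (subst ln_le_cancel_iff) auto
    finally have a: "ln (det (V t)) + ln (1 + c (Suc t) / real k) \<le> ln (det (V (Suc t)))" .
    have "(c (Suc t) / real k) / 2 \<le> ln (1 + c (Suc t) / real k)"
      using c_bounds[of "Suc t"] k by (intro ln_lower) auto
    then show ?thesis using a by (simp add: field_simps)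
  qed
  have V0: "det (V 0) = lam ^ CARD('n)"
  proof -
    have "det (V 0) = (\<Prod>i\<in>UNIV. V 0 $ i $ i)"
      by (rule det_diagonal) (simp add: V_def Vmat_0 mat_def)
    then show ?thesis by (simp add: V_def Vmat_0 mat_def)
  qed
  have lower: "d * ln lam + (\<Sum>t\<in>{1..n}. c t) / (2 * real k) \<le> ln (det (V n))" for n
  proof (induction n)
    case 0 then show ?case using lam by (simp add: V0 d_def ln_realpow)
  next
    case (Suc n)
    have "{1..Suc n} = insert (Suc n) {1..n}" by auto
    then have "(\<Sum>t\<in>{1..Suc n}. c t) / (2 * real k) = (\<Sum>t\<in>{1..n}. c t) / (2 * real k) + c (Suc n) / (2 * real k)"
      by (simp add: add_divide_distrib)
    then show ?case using Suc step[of n] by linarith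
  qed
  define M where "M = lam + L^2 * real k * real T / d"
  have M: "0 < M" unfolding M_def using lam d by (simp add: add_pos_nonneg)
  define a where "a = (\<lambda>i. V T $ i $ i)"
  have apos: "0 < a i" for i unfolding a_def by (rule pd_diag_pos[OF pdV])
  have suma: "(\<Sum>i\<in>UNIV. a i) \<le> d * M"
  proof -
    have "(\<Sum>i\<in>UNIV. a i) = d * lam + (\<Sum>s\<in>{1..T}. \<Sum>j\<in>{1..k}. \<Sum>i\<in>UNIV. (x s j $ i)^2)"
      unfolding a_def V_def Vmat_diag by (simp add: sum.distrib d_def sum.swap[of _ UNIV])
    also have "\<dots> = d * lam + (\<Sum>s\<in>{1..T}. \<Sum>j\<in>{1..k}. (norm (x s j))^2)"
      by (simp add: norm_sq_sum)
    also have "\<dots> \<le> d * lam + (\<Sum>s\<in>{1..T}. \<Sum>j\<in>{1..k}. L^2)"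
      using assms(3) by (intro add_left_mono sum_mono power_mono) auto
    also have "\<dots> = d * M" using d by (simp add: M_def field_simps)
    finally show ?thesis .
  qed
  have upper: "ln (det (V T)) \<le> d * ln M"
  proof -
    have "ln (det (V T)) \<le> ln (\<Prod>i\<in>UNIV. a i)"
      unfolding a_def using hadamard[OF pdV[of T]] by (subst ln_le_cancel_iff) (auto intro: prod_pos pd_diag_pos[OF pdV])
    also have "\<dots> = (\<Sum>i\<in>UNIV. ln (a i))"
      using apos by (subst ln_prod) (auto, metis less_irrefl)
    also have "\<dots> \<le> (\<Sum>i\<in>UNIV. ln M + a i / M - 1)"
    proof (intro sum_mono)
      fix i
      have "ln (a i / M) \<le> a i / M - 1" using apos[of i] M by (intro ln_le_minus_one) simp
      then show "ln (a i) \<le> ln M + a i / M - 1" using apos[of i] M by (simp add: ln_div)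
    qed
    also have "\<dots> = d * ln M + (\<Sum>i\<in>UNIV. a i) / M - d"
      by (simp add: sum.distrib sum_subtractf d_def sum_divide_distrib[symmetric])
    also have "\<dots> \<le> d * ln M"
      using suma M by (simp add: field_simps)
    finally show ?thesis .
  qed
  have "(\<Sum>t\<in>{1..T}. c t) / (2 * real k) \<le> d * ln M - d * ln lam"
    using lower[of T] upper by linarith
  also have "\<dots> = d * ln (1 + L\<^sup>2 * real k * real T / (d * lam))"
  proof -
    have "M / lam = 1 + L\<^sup>2 * real k * real T / (d * lam)"
      using lam d by (simp add: M_def field_simps)
    then have "ln M - ln lam = ln (1 + L\<^sup>2 * real k * real T / (d * lam))"
      using M lam by (metis ln_div less_irrefl)
    then show ?thesis by (simp add: right_diff_distrib[symmetric])
  qed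
  finally have "(\<Sum>t\<in>{1..T}. c t) \<le> 2 * d * real k * ln (1 + L\<^sup>2 * real k * real T / (d * lam))"
    using k by (simp add: field_simps)
  then show ?thesis by (simp add: c_def V_def d_def)
qed

end
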